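(* Let $k$ be an algebraically closed field, let $1\le s\le t$ be integers, $R=k[x,y]/(x^s,y^t)$ with its standard grading, and $\theta$ the image of $x+y$ in $R$. Let $\kappa$ be a nonzero homogeneous element of $R$ and put $d=\sigma(k[\theta]\kappa)$. If $t-1\le d<s+t-2$, then $$\sum_{i=0}^{s+t-2-d}k[\theta]\kappa x^i=\bigoplus_{i=0}^{s+t-2-d}k[\theta]\kappa x^i,$$ i.e. this sum of $k[\theta]$-submodules of $R$ is direct.
   Context: $R=\bigoplus_i R_i$ where $R_i$ is spanned by the images of monomials of degree $i$. For a nonzero homogeneous element $\kappa\in R_m$, the socle degree $\sigma(k[\theta]\kappa)$ is the integer $d$ such that the socle of the $k[\theta]$-module $k[\theta]\kappa$ is contained in $R_d$; equivalently $d=m+e$ where $e$ is the largest integer with $\theta^e\kappa\neq0$. *)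

theory Defs
  imports "HOL-Computational_Algebra.Polynomial"
begin

text \<open>Concrete model of R = k[x,y]/(x^s,y^t): an element is represented by its
 coefficient function on the monomial basis x^a y^b (a < s, b < t) of R;
 coefficients outside this range are zero.\<close>

type_synonym 'k relt = "nat \<Rightarrow> nat \<Rightarrow> 'k"

definition inR :: "nat \<Rightarrow> nat \<Rightarrow> 'k::zero relt \<Rightarrow> bool" where
  "inR s t f \<longleftrightarrow> (\<forall>a b. \<not> (a < s \<and> b < t) \<longrightarrow> f a b = 0)"

definition rzero :: "'k::zero relt" where
  "rzero = (\<lambda>a b. 0)"

definition radd :: "'k::plus relt \<Rightarrow> 'k relt \<Rightarrow> 'k relt" where
  "radd f g = (\<lambda>a b. f a b + g a b)"

definition rmul :: "nat \<Rightarrow> nat \<Rightarrow> 'k::comm_ring_1 relt \<Rightarrow> 'k relt \<Rightarrow> 'k relt" where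
  "rmul s t f g = (\<lambda>a b. if a < s \<and> b < t
      then (\<Sum>i\<le>a. \<Sum>j\<le>b. f i j * g (a - i) (b - j)) else 0)"

definition rmono :: "nat \<Rightarrow> nat \<Rightarrow> nat \<Rightarrow> nat \<Rightarrow> 'k::comm_ring_1 relt" where
  "rmono s t a b = (\<lambda>i j. if i = a \<and> j = b \<and> a < s \<and> b < t then 1 else 0)"

primrec rpow :: "nat \<Rightarrow> nat \<Rightarrow> 'k::comm_ring_1 relt \<Rightarrow> nat \<Rightarrow> 'k relt" where
  "rpow s t f 0 = rmono s t 0 0"
| "rpow s t f (Suc n) = rmul s t f (rpow s t f n)"

definition rtheta :: "nat \<Rightarrow> nat \<Rightarrow> 'k::comm_ring_1 relt" where
  "rtheta s t = radd (rmono s t 1 0) (rmono s t 0 1)"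

definition homog :: "nat \<Rightarrow> 'k::zero relt \<Rightarrow> bool" where
  "homog m f \<longleftrightarrow> (\<forall>a b. f a b \<noteq> 0 \<longrightarrow> a + b = m)"

definition socle_deg :: "nat \<Rightarrow> nat \<Rightarrow> nat \<Rightarrow> 'k::comm_ring_1 relt \<Rightarrow> nat" where
  "socle_deg s t m \<kappa> = m + (GREATEST e. rmul s t (rpow s t (rtheta s t) e) \<kappa> \<noteq> rzero)"

definition ktheta_span :: "nat \<Rightarrow> nat \<Rightarrow> 'k::comm_ring_1 relt \<Rightarrow> 'k relt set" where
  "ktheta_span s t g = {v. \<exists>(c :: nat \<Rightarrow> 'k) N.
      v = (\<lambda>a b. \<Sum>j<N. c j * rmul s t (rpow s t (rtheta s t) j) g a b)}"

definition direct_sum :: "nat \<Rightarrow> (nat \<Rightarrow> 'k::comm_ring_1 relt set) \<Rightarrow> bool" where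
  "direct_sum n M \<longleftrightarrow> (\<forall>v. (\<forall>i\<le>n. v i \<in> M i) \<and> (\<lambda>a b. \<Sum>i\<le>n. v i a b) = rzero
      \<longrightarrow> (\<forall>i\<le>n. v i = rzero))"

end

theory Submission
  imports Defs "HOL-Computational_Algebra.Formal_Power_Series"
begin

definition conv :: "'k::comm_ring_1 relt \<Rightarrow> 'k relt \<Rightarrow> 'k relt" where
  "conv f g = (\<lambda>a b. \<Sum>i\<le>a. \<Sum>j\<le>b. f i j * g (a - i) (b - j))"

definition trc :: "nat \<Rightarrow> nat \<Rightarrow> 'k::zero relt \<Rightarrow> 'k relt" where
  "trc s t f = (\<lambda>a b. if a < s \<and> b < t then f a b else 0)"

definition EE :: "'k::comm_ring_1 relt \<Rightarrow> 'k fps fps" where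
  "EE f = Abs_fps (\<lambda>b. Abs_fps (\<lambda>a. f a b))"

lemma EE_nth: "fps_nth (fps_nth (EE f) b) a = f a b"
  by (simp add: EE_def)

lemma EE_inj: "EE f = EE g \<Longrightarrow> f = g"
  by (metis EE_nth ext)

lemma EE_conv: "EE (conv f g) = EE f * EE g"
proof (rule fps_ext)
  fix b
  show "fps_nth (EE (conv f g)) b = fps_nth (EE f * EE g) b"
  proof (rule fps_ext)
    fix a
    have "fps_nth (fps_nth (EE f * EE g) b) a = (\<Sum>j=0..b. \<Sum>i=0..a. f i j * g (a - i) (b - j))"
      by (simp add: fps_mult_nth fps_sum_nth EE_nth)
    also have "\<dots> = (\<Sum>i=0..a. \<Sum>j=0..b. f i j * g (a - i) (b - j))"
      by (rule sum.swap)
    finally show "fps_nth (fps_nth (EE (conv f g)) b) a = fps_nth (fps_nth (EE f * EE g) b) a"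
      by (simp add: EE_nth conv_def atLeast0AtMost)
  qed
qed

lemma conv_comm: "conv f g = conv g f"
  by (rule EE_inj) (simp add: EE_conv mult.commute)

lemma conv_assoc: "conv f (conv g h) = conv (conv f g) h"
  by (rule EE_inj) (simp add: EE_conv mult.assoc)

lemma rmul_eq: "rmul s t f g = trc s t (conv f g)"
  by (simp add: rmul_def trc_def conv_def fun_eq_iff)

lemma trc_conv_right: "trc s t (conv f (trc s t g)) = trc s t (conv f g)"
  unfolding trc_def conv_def fun_eq_iff
  by (auto intro!: sum.cong)

lemma trc_conv_left: "trc s t (conv (trc s t f) g) = trc s t (conv f g)"
  by (metis conv_comm trc_conv_right)

lemma rmul_comm: "rmul s t f g = rmul s t g f"
  by (simp add: rmul_eq conv_comm)

lemma rmul_assoc: "rmul s t f (rmul s t g h) = rmul s t (rmul s t f g) h"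
  by (simp add: rmul_eq trc_conv_right trc_conv_left conv_assoc)

lemma sum_swap3:
  "(\<Sum>i\<le>x. \<Sum>j\<le>y. \<Sum>n\<in>J. F i j n) = (\<Sum>n\<in>J. \<Sum>i\<le>x. \<Sum>j\<le>y. F i j n)"
proof -
  have "(\<Sum>i\<le>x. \<Sum>j\<le>y. \<Sum>n\<in>J. F i j n) = (\<Sum>i\<le>x. \<Sum>n\<in>J. \<Sum>j\<le>y. F i j n)"
    by (rule sum.cong[OF refl], rule sum.swap)
  also have "\<dots> = (\<Sum>n\<in>J. \<Sum>i\<le>x. \<Sum>j\<le>y. F i j n)"
    by (rule sum.swap)
  finally show ?thesis .
qed

lemma rmul_sum_right:
  "rmul s t f (\<lambda>a b. \<Sum>j\<in>J. c j * g j a b) = (\<lambda>a b. \<Sum>j\<in>J. c j * rmul s t f (g j) a b)"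
proof (rule ext, rule ext)
  fix x y
  have "(\<Sum>i\<le>x. \<Sum>j\<le>y. f i j * (\<Sum>n\<in>J. c n * g n (x - i) (y - j)))
      = (\<Sum>i\<le>x. \<Sum>j\<le>y. \<Sum>n\<in>J. c n * (f i j * g n (x - i) (y - j)))"
    by (simp add: sum_distrib_left mult.left_commute)
  also have "\<dots> = (\<Sum>n\<in>J. \<Sum>i\<le>x. \<Sum>j\<le>y. c n * (f i j * g n (x - i) (y - j)))"
    by (rule sum_swap3)
  also have "\<dots> = (\<Sum>n\<in>J. c n * (\<Sum>i\<le>x. \<Sum>j\<le>y. f i j * g n (x - i) (y - j)))"
    by (simp add: sum_distrib_left)
  finally have eq: "(\<Sum>i\<le>x. \<Sum>j\<le>y. f i j * (\<Sum>n\<in>J. c n * g n (x - i) (y - j)))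
      = (\<Sum>n\<in>J. c n * (\<Sum>i\<le>x. \<Sum>j\<le>y. f i j * g n (x - i) (y - j)))" .
  show "rmul s t f (\<lambda>a b. \<Sum>j\<in>J. c j * g j a b) x y = (\<Sum>j\<in>J. c j * rmul s t f (g j) x y)"
    by (cases "x < s \<and> y < t") (auto simp: rmul_def eq)
qed

lemma rmul_mono:
  "rmul s t (rmono s t p q) g = (\<lambda>a b. if a < s \<and> b < t \<and> p \<le> a \<and> q \<le> b then g (a - p) (b - q) else 0)"
proof -
  have "(\<Sum>i\<le>a. \<Sum>j\<le>b. (if i = p \<and> j = q \<and> p < s \<and> q < t then 1 else 0) * g (a - i) (b - j))
        = (if p \<le> a \<and> q \<le> b \<and> p < s \<and> q < t then g (a - p) (b - q) else 0)" for a b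
  proof -
    have "(\<Sum>i\<le>a. \<Sum>j\<le>b. (if i = p \<and> j = q \<and> p < s \<and> q < t then 1 else 0) * g (a - i) (b - j))
      = (\<Sum>i\<le>a. if i = p then (if q \<le> b \<and> p < s \<and> q < t then g (a - p) (b - q) else 0) else 0)"
      by (intro sum.cong refl) (auto simp: if_distrib[of "\<lambda>x. x * _"] sum.delta cong: if_cong)
    also have "\<dots> = (if p \<le> a \<and> q \<le> b \<and> p < s \<and> q < t then g (a - p) (b - q) else 0)"
      by (simp add: sum.delta)
    finally show ?thesis .
  qed
  then show ?thesis
    by (auto simp: rmul_def rmono_def fun_eq_iff)
qed

lemma rmul_radd_left: "rmul s t (radd f g) h = radd (rmul s t f h) (rmul s t g h)"
  by (simp add: rmul_def radd_def fun_eq_iff distrib_right sum.distrib)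

lemma rmul_theta:
  "rmul s t (rtheta s t) w = (\<lambda>a b. if a < s \<and> b < t then
     (if 1 \<le> a then w (a - 1) b else 0) + (if 1 \<le> b then w a (b - 1) else 0) else 0)"
  unfolding rtheta_def rmul_radd_left rmul_mono by (auto simp: radd_def fun_eq_iff)

lemma rmul_zero_right: "rmul s t f rzero = rzero"
  by (simp add: rmul_def rzero_def fun_eq_iff)

lemma inR_rmul: "inR s t (rmul s t f g)"
  by (simp add: inR_def rmul_def)

lemma inR_rmono: "inR s t (rmono s t p q)"
  by (simp add: inR_def rmono_def)

lemma rmul_unit: "1 \<le> s \<Longrightarrow> 1 \<le> t \<Longrightarrow> inR s t g \<Longrightarrow> rmul s t (rmono s t 0 0) g = g"
  by (auto simp: rmul_mono fun_eq_iff inR_def)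

lemma inR_rpow: "inR s t (rpow s t f r)"
  by (cases r) (simp_all add: inR_rmul inR_rmono)

lemma rpow_add: "1 \<le> s \<Longrightarrow> 1 \<le> t \<Longrightarrow>
   rpow s t f (j + r) = rmul s t (rpow s t f j) (rpow s t f r)"
  by (induction j) (simp_all add: rmul_unit inR_rpow rmul_assoc)

lemma rpow_x: "rpow s t (rmono s t 1 0) i = rmono s t i 0"
proof (induction i)
  case 0 then show ?case by simp
next
  case (Suc i) then show ?case by (simp add: rmul_mono) (auto simp: rmono_def fun_eq_iff)
qed

lemma homog_rmul: "homog p f \<Longrightarrow> homog q g \<Longrightarrow> homog (p + q) (rmul s t f g)"
proof -
  assume hf: "homog p f" and hg: "homog q g"
  show ?thesis unfolding homog_def
  proof (intro allI impI)
    fix a b assume "rmul s t f g a b \<noteq> 0"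
    then have "(\<Sum>i\<le>a. \<Sum>j\<le>b. f i j * g (a - i) (b - j)) \<noteq> 0"
      by (cases "a < s \<and> b < t") (simp_all add: rmul_def)
    then obtain i where i: "i \<le> a" "(\<Sum>j\<le>b. f i j * g (a - i) (b - j)) \<noteq> 0"
      by (meson atMost_iff sum.not_neutral_contains_not_neutral)
    then obtain j where j: "j \<le> b" "f i j * g (a - i) (b - j) \<noteq> 0"
      by (meson atMost_iff sum.not_neutral_contains_not_neutral)
    then have "f i j \<noteq> 0" "g (a - i) (b - j) \<noteq> 0" by auto
    then have "i + j = p" "(a - i) + (b - j) = q" using hf hg unfolding homog_def by auto
    then show "a + b = p + q" using i(1) j(1) by linarith
  qed
qed

lemma homog_rmono: "homog (p + q) (rmono s t p q)"
  by (simp add: homog_def rmono_def)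

lemma homog_radd:
  fixes f g :: "'k::comm_ring_1 relt"
  shows "homog p f \<Longrightarrow> homog p g \<Longrightarrow> homog p (radd f g)"
proof -
  assume hf: "homog p f" and hg: "homog p g"
  show ?thesis unfolding homog_def radd_def
  proof (intro allI impI)
    fix a b assume "f a b + g a b \<noteq> 0"
    then have "f a b \<noteq> 0 \<or> g a b \<noteq> 0" by auto
    then show "a + b = p" using hf hg unfolding homog_def by blast
  qed
qed

lemma homog_theta: "homog 1 (rtheta s t)"
  unfolding rtheta_def by (rule homog_radd) (use homog_rmono[of 1 0] homog_rmono[of 0 1] in auto)

lemma homog_rpow: "homog 1 f \<Longrightarrow> homog r (rpow s t f r)"
  by (induction r) (use homog_rmono[of 0 0] homog_rmul in fastforce)+

lemma homog_big_zero: "inR s t f \<Longrightarrow> homog p f \<Longrightarrow> s + t - 2 < p \<Longrightarrow> f = rzero"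
proof -
  assume a1: "inR s t f" and a2: "homog p f" and a3: "s + t - 2 < p"
  have "f a b = 0" for a b
  proof (rule ccontr)
    assume "f a b \<noteq> 0"
    then have "a < s" "b < t" "a + b = p" using a1 a2 unfolding inR_def homog_def by auto
    then show False using a3 by linarith
  qed
  then show ?thesis by (simp add: rzero_def fun_eq_iff)
qed

lemma key:
  fixes w :: "'k::comm_ring_1 relt"
  assumes "2 \<le> s" "s \<le> t" "inR s t w" "homog d w" "w \<noteq> rzero"
    "rmul s t (rtheta s t) w = rzero" "t - 1 \<le> d" "d \<le> s + t - 2"
  shows "w (d + 1 - t) (t - 1) \<noteq> 0"
proof -
  define lo where "lo = d + 1 - t"
  have rel: "w a (d - a) = - w (a - 1) (d - (a - 1))" if "lo < a" "a \<le> s - 1" for a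
  proof -
    have "rmul s t (rtheta s t) w a (d + 1 - a) = 0"
      using assms(6) by (simp add: rzero_def)
    moreover have "a < s" "d + 1 - a < t" "1 \<le> a" "1 \<le> d + 1 - a"
      using that assms lo_def by auto
    ultimately have "w (a - 1) (d + 1 - a) + w a (d + 1 - a - 1) = 0"
      by (simp add: rmul_theta)
    moreover have "d + 1 - a - 1 = d - a" "d - (a - 1) = d + 1 - a"
      using that assms lo_def by auto
    ultimately show ?thesis by (simp add: eq_neg_iff_add_eq_0 add.commute)
  qed
  have prp: "lo + k \<le> s - 1 \<Longrightarrow> (w (lo + k) (d - (lo + k)) \<noteq> 0 \<longleftrightarrow> w lo (d - lo) \<noteq> 0)" for k
  proof (induction k)
    case 0 then show ?case by simp
  next
    case (Suc k)
    have "w (lo + Suc k) (d - (lo + Suc k)) = - w (lo + Suc k - 1) (d - (lo + Suc k - 1))"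
      using Suc.prems by (intro rel) auto
    then show ?case using Suc by simp
  qed
  obtain a b where ab: "w a b \<noteq> 0"
    using assms(5) by (auto simp: rzero_def fun_eq_iff)
  have "a < s" "b < t" using ab assms(3) by (auto simp: inR_def)
  moreover have "a + b = d" using ab assms(4) by (auto simp: homog_def)
  ultimately have k: "a = lo + (a - lo)" "lo + (a - lo) \<le> s - 1" "b = d - (lo + (a - lo))"
    using lo_def by arith+
  have eq1: "lo + (a - lo) = a" using k(1) by linarith
  have "w (lo + (a - lo)) (d - (lo + (a - lo))) \<noteq> 0" unfolding eq1 using ab k(3) eq1 by simp
  then have "w lo (d - lo) \<noteq> 0" using prp[OF k(2)] by blast
  moreover have "d - lo = t - 1" using lo_def assms by auto
  ultimately show ?thesis using lo_def by simp
qed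

lemma rmul_zero_left: "rmul s t rzero f = rzero"
  by (simp only: rmul_comm[of s t rzero f] rmul_zero_right)

theorem lemma2p14:
  fixes s t m d :: nat and \<kappa> :: "'k::alg_closed_field relt"
  assumes "1 \<le> s" and "s \<le> t"
    and "inR s t \<kappa>" and "\<kappa> \<noteq> rzero" and "homog m \<kappa>"
    and "d = socle_deg s t m \<kappa>"
    and "t - 1 \<le> d" and "d < s + t - 2"
  shows "direct_sum (s + t - 2 - d)
           (\<lambda>i. ktheta_span s t (rmul s t \<kappa> (rpow s t (rmono s t 1 0) i)))"
proof -
  define P :: "nat \<Rightarrow> 'k relt" where "P = rpow s t (rtheta s t)"
  have s2: "2 \<le> s" using assms(7,8) by arith
  have t1: "1 \<le> t" using assms(1,2) by arith
  define Q where "Q e \<longleftrightarrow> rmul s t (P e) \<kappa> \<noteq> rzero" for e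
  have Q0: "Q 0" using assms(1,3,4) t1 by (simp add: Q_def P_def rmul_unit)
  have hP: "homog (y + m) (rmul s t (P y) \<kappa>)" for y
    unfolding P_def by (intro homog_rmul homog_rpow homog_theta assms(5))
  have Qb: "y \<le> s + t" if "Q y" for y
  proof (rule ccontr)
    assume "\<not> y \<le> s + t"
    then have "rmul s t (P y) \<kappa> = rzero"
      by (intro homog_big_zero[OF inR_rmul hP]) auto
    then show False using that Q_def by simp
  qed
  define e where "e = (GREATEST e. Q e)"
  have Qe: "Q e" unfolding e_def using Q0 Qb by (rule GreatestI_nat)
  have notQ: "\<not> Q j" if "e < j" for j
    using Greatest_le_nat[of Q _ "s + t"] Qb that e_def by force
  have d_eq: "d = m + e"
    using assms(6) by (simp add: socle_deg_def e_def Q_def P_def)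
  define w where "w = rmul s t (P e) \<kappa>"
  have w_nz: "w \<noteq> rzero" using Qe by (simp add: Q_def w_def)
  have w_h: "homog d w" using hP[of e] d_eq by (simp add: w_def add.commute)
  have w_t: "rmul s t (rtheta s t) w = rzero"
  proof -
    have "rmul s t (rtheta s t) w = rmul s t (P (Suc e)) \<kappa>"
      by (simp add: w_def rmul_assoc P_def)
    then show ?thesis using notQ[of "Suc e"] by (simp add: Q_def)
  qed
  define n where "n = s + t - 2 - d"
  have n_le: "n \<le> s - 1" using assms(7) n_def by arith
  have w_in: "inR s t w" unfolding w_def by (rule inR_rmul)
  have kw: "w (d + 1 - t) (t - 1) \<noteq> 0"
    by (rule key[OF s2 assms(2) w_in w_h w_nz w_t assms(7)]) (use assms(8) in arith)
  define h where "h i j = rmul s t (P j) (rmul s t \<kappa> (rmono s t i 0))" for i j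
  have h_shift: "h i (r + j) = rmul s t (P r) (h i j)" for i j r
    unfolding h_def P_def using s2 t1 by (simp add: rpow_add rmul_assoc)
  have h_e: "h i e = rmul s t (rmono s t i 0) w" for i
    unfolding h_def w_def by (rule trans[OF rmul_assoc rmul_comm])
  have h_big: "h i j = rzero" if "e < j" for i j
  proof -
    have "h i j = rmul s t (rmul s t (P j) \<kappa>) (rmono s t i 0)"
      unfolding h_def by (simp add: rmul_assoc)
    then show ?thesis using notQ[OF that] by (simp add: Q_def rmul_zero_left)
  qed
  have u_nz: "h i e \<noteq> rzero" if "i \<le> n" for i
  proof
    assume z: "h i e = rzero"
    have "rmul s t (rmono s t (n - i) 0) (h i e) = rmul s t (rmono s t n 0) w"
    proof -
      have ee: "rpow s t (rmono s t 1 0) ((n - i) + i) =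
          rmul s t (rpow s t (rmono s t 1 0) (n - i)) (rpow s t (rmono s t 1 0) i)"
        by (rule rpow_add) (use s2 t1 in auto)
      have mn: "rmono s t n 0 = rmul s t (rmono s t (n - i) 0) (rmono s t i 0)"
      proof -
        have "n - i + i = n" using that by simp
        then show ?thesis using ee unfolding rpow_x by simp
      qed
      show ?thesis by (simp only: h_e rmul_assoc mn)
    qed
    then have "rmul s t (rmono s t n 0) w = rzero" using z by (simp add: rmul_zero_right)
    then have "rmul s t (rmono s t n 0) w (s - 1) (t - 1) = 0" by (simp add: rzero_def)
    moreover have "s - 1 - n = d + 1 - t" using n_def assms(7,8) by arith
    ultimately show False using kw n_le s2 t1 by (simp add: rmul_mono)
  qed
  have u_h: "homog (d + i) (h i e)" for i
    using homog_rmul[OF homog_rmono[of i 0] w_h, of s t] by (simp add: h_e add.commute)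
  show ?thesis
    unfolding direct_sum_def n_def[symmetric] rpow_x
  proof (rule allI, rule impI)
    fix v
    assume A: "(\<forall>i\<le>n. v i \<in> ktheta_span s t (rmul s t \<kappa> (rmono s t i 0))) \<and>
        (\<lambda>a b. \<Sum>i\<le>n. v i a b) = rzero"
    have "\<exists>p. i \<le> n \<longrightarrow> v i = (\<lambda>a b. \<Sum>j<snd p. fst p j * h i j a b)" for i
    proof (cases "i \<le> n")
      case True
      then have "v i \<in> ktheta_span s t (rmul s t \<kappa> (rmono s t i 0))" using A by simp
      then have "\<exists>c N. v i = (\<lambda>a b. \<Sum>j<N. c j * rmul s t (rpow s t (rtheta s t) j) (rmul s t \<kappa> (rmono s t i 0)) a b)"
        unfolding ktheta_span_def mem_Collect_eq .
      then obtain c N where "v i = (\<lambda>a b. \<Sum>j<N. c j * rmul s t (rpow s t (rtheta s t) j) (rmul s t \<kappa> (rmono s t i 0)) a b)"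
        by iprover
      then show ?thesis by (intro exI[of _ "(c, N)"]) (simp add: h_def P_def)
    qed simp
    then have "\<forall>i. \<exists>p. i \<le> n \<longrightarrow> v i = (\<lambda>a b. \<Sum>j<snd p. fst p j * h i j a b)" by iprover
    from choice[OF this] obtain F where
      F0: "\<forall>i. i \<le> n \<longrightarrow> v i = (\<lambda>a b. \<Sum>j<snd (F i). fst (F i) j * h i j a b)"
      by iprover
    have F: "v i = (\<lambda>a b. \<Sum>j<snd (F i). fst (F i) j * h i j a b)" if "i \<le> n" for i
      using F0 that by simp
    define c where "c i j = (if j < snd (F i) then fst (F i) j else 0)" for i j
    have vrep: "v i = (\<lambda>a b. \<Sum>j\<le>e. c i j * h i j a b)" if "i \<le> n" for i
    proof -
      have "(\<Sum>j<snd (F i). fst (F i) j * h i j a b) = (\<Sum>j\<le>e. c i j * h i j a b)" for a b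
      proof -
        have "(\<Sum>j<snd (F i). fst (F i) j * h i j a b) = (\<Sum>j\<in>{..<snd (F i)} \<inter> {..e}. fst (F i) j * h i j a b)"
        proof (rule sum.mono_neutral_right)
          have hb: "\<And>j. e < j \<Longrightarrow> h i j a b = 0" using h_big by (simp add: rzero_def)
          show "\<forall>j\<in>{..<snd (F i)} - {..<snd (F i)} \<inter> {..e}. fst (F i) j * h i j a b = 0"
          proof
            fix j assume "j \<in> {..<snd (F i)} - {..<snd (F i)} \<inter> {..e}"
            then have "e < j" by auto
            then show "fst (F i) j * h i j a b = 0" by (simp add: hb)
          qed
        qed auto
        also have "\<dots> = (\<Sum>j\<in>{..e} \<inter> {..<snd (F i)}. fst (F i) j * h i j a b)"
          by (simp add: Int_commute)
        also have "\<dots> = (\<Sum>j\<le>e. c i j * h i j a b)"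
          by (subst sum.inter_restrict) (auto simp: c_def intro!: sum.cong)
        finally show ?thesis .
      qed
      then show ?thesis using F[OF that] by auto
    qed
    have cz: "\<forall>i\<le>n. \<forall>j\<le>e. c i j = 0"
    proof (rule ccontr)
      assume "\<not> ?thesis"
      then have ex: "\<exists>j. \<exists>i\<le>n. j \<le> e \<and> c i j \<noteq> 0" by auto
      define j0 where "j0 = (LEAST j. \<exists>i\<le>n. j \<le> e \<and> c i j \<noteq> 0)"
      obtain i1 where i1: "i1 \<le> n" "j0 \<le> e" "c i1 j0 \<noteq> 0"
        using LeastI_ex[OF ex] j0_def by blast
      have below: "c i j = 0" if "i \<le> n" "j < j0" for i j
        using not_less_Least[of j "\<lambda>j. \<exists>i\<le>n. j \<le> e \<and> c i j \<noteq> 0"] that i1(2) j0_def by auto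
      define r where "r = e - j0"
      have cp: "(\<Sum>i\<le>n. \<Sum>j\<le>e. G i j) = (\<Sum>p\<in>{..n} \<times> {..e}. G (fst p) (snd p))"
        for G :: "nat \<Rightarrow> nat \<Rightarrow> 'k"
        unfolding sum.cartesian_product by (simp add: case_prod_unfold)
      have sumv: "(\<lambda>a b. \<Sum>i\<le>n. v i a b) = (\<lambda>a b. \<Sum>p\<in>{..n} \<times> {..e}. c (fst p) (snd p) * h (fst p) (snd p) a b)"
      proof -
        have "(\<Sum>i\<le>n. v i a b) = (\<Sum>i\<le>n. \<Sum>j\<le>e. c i j * h i j a b)" for a b
          by (rule sum.cong) (auto simp: vrep)
        then show ?thesis by (simp add: cp)
      qed
      have "rmul s t (P r) (\<lambda>a b. \<Sum>i\<le>n. v i a b) = rzero"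
        using A by (simp add: rmul_zero_right)
      then have "(\<lambda>a b. \<Sum>p\<in>{..n} \<times> {..e}. c (fst p) (snd p) * h (fst p) (r + snd p) a b) = rzero"
        unfolding sumv rmul_sum_right by (simp add: h_shift)
      then have S: "(\<Sum>i\<le>n. \<Sum>j\<le>e. c i j * h i (r + j) a b) = 0" for a b
        by (simp add: fun_eq_iff rzero_def cp)
      have inner: "(\<Sum>j\<le>e. c i j * h i (r + j) a b) = c i j0 * h i e a b" if "i \<le> n" for i a b
      proof -
        have "(\<Sum>j\<le>e. c i j * h i (r + j) a b) = (\<Sum>j\<le>e. if j = j0 then c i j0 * h i e a b else 0)"
        proof (rule sum.cong[OF refl])
          fix j assume "j \<in> {..e}"
          show "c i j * h i (r + j) a b = (if j = j0 then c i j0 * h i e a b else 0)"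
          proof (cases "j < j0")
            case True then show ?thesis using below[OF that] by simp
          next
            case False
            show ?thesis
            proof (cases "j = j0")
              case True then show ?thesis using i1 r_def by simp
            next
              case F2: False
              then have "e < r + j" using False i1 r_def by auto
              then show ?thesis using h_big F2 by (simp add: rzero_def)
            qed
          qed
        qed
        then show ?thesis using i1 by simp
      qed
      have S2: "(\<Sum>i\<le>n. c i j0 * h i e a b) = 0" for a b
        using S[of a b] inner by simp
      obtain a b where ab: "h i1 e a b \<noteq> 0"
        using u_nz[OF i1(1)] by (auto simp: rzero_def fun_eq_iff)
      have deg: "a + b = d + i1" using ab u_h[of i1] by (auto simp: homog_def)
      have "(\<Sum>i\<le>n. c i j0 * h i e a b) = (\<Sum>i\<le>n. if i = i1 then c i1 j0 * h i1 e a b else 0)"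
      proof (rule sum.cong[OF refl])
        fix i assume "i \<in> {..n}"
        show "c i j0 * h i e a b = (if i = i1 then c i1 j0 * h i1 e a b else 0)"
        proof (cases "i = i1")
          case False
          then have "h i e a b = 0" using u_h[of i] deg unfolding homog_def by (metis add_left_cancel)
          then show ?thesis using False by simp
        qed simp
      qed
      also have "\<dots> = c i1 j0 * h i1 e a b" using i1(1) by simp
      finally have "c i1 j0 * h i1 e a b = 0" using S2[of a b] by simp
      then show False using ab i1(3) by simp
    qed
    show "\<forall>i\<le>n. v i = rzero"
    proof (intro allI impI)
      fix i assume i: "i \<le> n"
      then have "v i = (\<lambda>a b. \<Sum>j\<le>e. c i j * h i j a b)" by (rule vrep)
      also have "\<dots> = rzero" using cz i by (simp add: rzero_def)
      finally show "v i = rzero" .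
    qed
  qed
qed

end
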